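(* In the continuous Donation Game, assume additionally that $b$ and $c$ are continuous and that $s\mapsto\chi b(s)+c(s)$ is strictly increasing on $[0,K]$. Let $\chi\ge1$, $0\le\kappa\le b(K)-c(K)$, $\psi(s):=-\chi b(s)-c(s)$ (a continuous strictly decreasing bijection $[0,K]\to[\psi(K),0]$ with inverse $\psi^{-1}$), and suppose $\lambda\ge\frac{b(K)+\chi c(K)}{\chi b(K)+c(K)}$. Let $x_0\in[0,K]$ satisfy $$\frac{(\chi-1)\kappa-\lambda(\chi b(K)+c(K))+b(K)+\chi c(K)}{1-\lambda}\le\chi b(x_0)+c(x_0)\le\frac{(\chi-1)\kappa}{1-\lambda}.$$ Then $r^X(x,y):=\psi^{-1}\!\left(\frac{-b(y)-\chi c(y)-(\chi-1)\kappa-(1-\lambda)\psi(x_0)}{\lambda}\right)$ is well defined for all $x,y\in[0,K]$, and the deterministic memory-one strategy for $X$ with $\sigma_X^0=\delta_{x_0}$ and $\sigma_X[x,y]=\delta_{r^X(x,y)}$ enforces $\pi_X-\kappa=\chi(\pi_Y-\kappa)$ against every behavioral strategy of $Y$.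
   Context: Continuous Donation Game: fix $K>0$ and measurable nondecreasing functions $b,c:[0,K]\to\mathbb{R}$ with $b(0)=c(0)=0$ and $b(s)>c(s)$ for $s>0$. Action spaces $S_X=S_Y=[0,K]$, payoffs $u_X(x,y)=b(y)-c(x)$, $u_Y(x,y)=b(x)-c(y)$, discount factor $\lambda\in(0,1)$. Repeated-game framework: histories $\mathcal{H}=\bigsqcup_T(S_X\times S_Y)^T$; a behavioral strategy is a Markov kernel from histories to the player's action space; a memory-one strategy for $X$ consists of an initial probability measure $\sigma_X^0$ and a Markov kernel $\sigma_X[x,y]$ applied to the previous action pair. The strategies generate, via $\mu_0=\sigma_X[\varnothing]\otimes\sigma_Y[\varnothing]$ and $\mu_t(E'\times E)=\int_{E'}(\sigma_X[h]\otimes\sigma_Y[h])(E)\,d\mu_{t-1}(h)$, the laws $\nu_t(E)=\mu_t(\mathcal{H}^t\times E)$ of the action pair at time $t$, and $\pi_X=(1-\lambda)\sum_t\lambda^t\int u_X\,d\nu_t$, $\pi_Y=(1-\lambda)\sum_t\lambda^t\int u_Y\,d\nu_t$. $\delta_s$ is the Dirac measure at $s$. *)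

theory Defs
  imports "HOL-Probability.Probability"
begin

definition act :: "real \<Rightarrow> real measure" where
  "act K = restrict_space borel {0..K}"

text \<open>Histories of length t: elements of (S_X x S_Y)^t, encoded as extensional
  functions on {..<t}; entry i is the action pair (x_i, y_i) played at time i.\<close>
definition histM :: "real \<Rightarrow> nat \<Rightarrow> (nat \<Rightarrow> real \<times> real) measure" where
  "histM K t = PiM {..<t} (\<lambda>_. act K \<Otimes>\<^sub>M act K)"

definition behavioral_strategy ::
  "real \<Rightarrow> (nat \<Rightarrow> (nat \<Rightarrow> real \<times> real) \<Rightarrow> real measure) \<Rightarrow> bool" where
  "behavioral_strategy K \<sigma> \<longleftrightarrow> (\<forall>t. \<sigma> t \<in> histM K t \<rightarrow>\<^sub>M prob_algebra (act K))"

definition memory_one ::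
  "real measure \<Rightarrow> (real \<times> real \<Rightarrow> real measure) \<Rightarrow> nat \<Rightarrow> (nat \<Rightarrow> real \<times> real) \<Rightarrow> real measure" where
  "memory_one s0 \<sigma> t h = (if t = 0 then s0 else \<sigma> (h (t - 1)))"

text \<open>Law mu of the history: hist_law ... t is the law of the history of length t.
  (The paper's mu_t is hist_law ... (Suc t).)\<close>
fun hist_law ::
  "real \<Rightarrow> (nat \<Rightarrow> (nat \<Rightarrow> real \<times> real) \<Rightarrow> real measure)
   \<Rightarrow> (nat \<Rightarrow> (nat \<Rightarrow> real \<times> real) \<Rightarrow> real measure) \<Rightarrow> nat \<Rightarrow> (nat \<Rightarrow> real \<times> real) measure" where
  "hist_law K sX sY 0 = return (histM K 0) (\<lambda>_. undefined)"
| "hist_law K sX sY (Suc t) =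
     bind (hist_law K sX sY t)
       (\<lambda>h. distr (sX t h \<Otimes>\<^sub>M sY t h) (histM K (Suc t)) (\<lambda>a. h(t := a)))"

definition action_law ::
  "real \<Rightarrow> (nat \<Rightarrow> (nat \<Rightarrow> real \<times> real) \<Rightarrow> real measure)
   \<Rightarrow> (nat \<Rightarrow> (nat \<Rightarrow> real \<times> real) \<Rightarrow> real measure) \<Rightarrow> nat \<Rightarrow> (real \<times> real) measure" where
  "action_law K sX sY t = distr (hist_law K sX sY (Suc t)) (act K \<Otimes>\<^sub>M act K) (\<lambda>h. h t)"

definition payoff ::
  "real \<Rightarrow> real \<Rightarrow> (real \<times> real \<Rightarrow> real) \<Rightarrow> (nat \<Rightarrow> (nat \<Rightarrow> real \<times> real) \<Rightarrow> real measure)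
   \<Rightarrow> (nat \<Rightarrow> (nat \<Rightarrow> real \<times> real) \<Rightarrow> real measure) \<Rightarrow> real" where
  "payoff K lam u sX sY = (1 - lam) * (\<Sum>t. lam ^ t * (\<integral>a. u a \<partial>action_law K sX sY t))"

end

theory Submission
  imports Defs
begin

lemma int_bnd:
  fixes f :: "'a \<Rightarrow> real"
  assumes M: "prob_space M" and f: "f \<in> borel_measurable M" and B: "\<And>x. x \<in> space M \<Longrightarrow> \<bar>f x\<bar> \<le> B"
  shows "integrable M f" "\<bar>\<integral>x. f x \<partial>M\<bar> \<le> B"
proof -
  interpret prob_space M by (rule M)
  show i: "integrable M f" using B f by (intro integrable_const_bound[where B=B]) (auto intro!: AE_I2)
  have "\<bar>\<integral>x. f x \<partial>M\<bar> \<le> (\<integral>x. \<bar>f x\<bar> \<partial>M)" by (rule integral_abs_bound)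
  also have "\<dots> \<le> (\<integral>x. B \<partial>M)" using i B by (intro integral_mono) auto
  also have "\<dots> = B" by (simp add: prob_space)
  finally show "\<bar>\<integral>x. f x \<partial>M\<bar> \<le> B" .
qed

locale DG =
  fixes K lam chi kappa x0 :: real and b c :: "real \<Rightarrow> real"
  assumes K: "K > 0"
    and b0: "b 0 = 0" and c0: "c 0 = 0"
    and bmono: "mono_on {0..K} b" and cmono: "mono_on {0..K} c"
    and bcont: "continuous_on {0..K} b" and ccont: "continuous_on {0..K} c"
    and lam: "0 < lam" "lam < 1"
    and chi: "chi \<ge> 1"
    and smono: "strict_mono_on {0..K} (\<lambda>s. chi * b s + c s)"
    and x0: "x0 \<in> {0..K}"
    and x0lo: "((chi - 1) * kappa - lam * (chi * b K + c K) + b K + chi * c K) / (1 - lam)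
                 \<le> chi * b x0 + c x0"
    and x0hi: "chi * b x0 + c x0 \<le> (chi - 1) * kappa / (1 - lam)"
begin

definition psi where "psi s = - chi * b s - c s"
definition phi where "phi y = b y + chi * c y"
definition Cst where "Cst = (chi - 1) * kappa + (1 - lam) * psi x0"
definition argy where "argy y = (- b y - chi * c y - (chi - 1) * kappa - (1 - lam) * psi x0) / lam"
definition g where "g y = the_inv_into {0..K} psi (argy y)"
definition sX where "sX = memory_one (return (act K) x0) (\<lambda>p. return (act K) (g (snd p)))"

lemma b_bnd: "s \<in> {0..K} \<Longrightarrow> 0 \<le> b s \<and> b s \<le> b K"
  using mono_onD[OF bmono, of 0 s] mono_onD[OF bmono, of s K] K b0 by auto
lemma c_bnd: "s \<in> {0..K} \<Longrightarrow> 0 \<le> c s \<and> c s \<le> c K"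
  using mono_onD[OF cmono, of 0 s] mono_onD[OF cmono, of s K] K c0 by auto

lemma argy_eq: "argy y = (- phi y - Cst) / lam"
  unfolding argy_def phi_def Cst_def by (simp add: algebra_simps)

lemma psi_cont: "continuous_on {0..K} psi"
  unfolding psi_def by (intro continuous_intros bcont ccont)

lemma psi_inj: "inj_on psi {0..K}"
proof -
  have "inj_on (\<lambda>s. chi * b s + c s) {0..K}" by (rule strict_mono_on_imp_inj_on[OF smono])
  then show ?thesis unfolding psi_def inj_on_def by (metis add.commute minus_add_distrib
      mult_minus_left neg_equal_iff_equal uminus_add_conv_diff)
qed

lemma argy_in: assumes y: "y \<in> {0..K}" shows "argy y \<in> psi ` {0..K}"
proof -
  have ch: "1 - lam > 0" using lam by simp
  have "(1 - lam) * (chi * b x0 + c x0) \<le> (chi - 1) * kappa"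
    using x0hi ch by (simp add: pos_le_divide_eq mult.commute)
  moreover have "(chi - 1) * kappa - lam * (chi * b K + c K) + b K + chi * c K \<le> (1 - lam) * (chi * b x0 + c x0)"
    using x0lo ch by (simp add: pos_divide_le_eq mult.commute)
  moreover have "0 \<le> b y" "b y \<le> b K" "0 \<le> c y" "c y \<le> c K" using b_bnd[OF y] c_bnd[OF y] by auto
  moreover have "0 \<le> chi * c y" "chi * c y \<le> chi * c K"
    using b_bnd[OF y] c_bnd[OF y] chi by (auto intro: mult_left_mono)
  ultimately have n1: "- b y - chi * c y - (chi - 1) * kappa - (1 - lam) * psi x0 \<le> 0"
    and n2: "- lam * (chi * b K + c K) \<le> - b y - chi * c y - (chi - 1) * kappa - (1 - lam) * psi x0"
    unfolding psi_def by (auto simp: algebra_simps)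
  have le0: "argy y \<le> psi 0" using n1 lam unfolding argy_def psi_def b0 c0 by (simp add: divide_le_0_iff)
  have geK: "psi K \<le> argy y" using n2 lam unfolding argy_def psi_def by (simp add: le_divide_eq algebra_simps)
  obtain x where "0 \<le> x" "x \<le> K" "psi x = argy y"
    using IVT2'[OF geK le0 _ psi_cont] K by auto
  then show ?thesis by force
qed


lemma g_in: "y \<in> {0..K} \<Longrightarrow> g y \<in> {0..K}"
  unfolding g_def using argy_in the_inv_into_into[OF psi_inj] by blast

lemma psi_g: "y \<in> {0..K} \<Longrightarrow> psi (g y) = argy y"
  unfolding g_def using argy_in f_the_inv_into_f[OF psi_inj] by blast

lemma g_cont: "continuous_on {0..K} g"
proof -
  have ca: "continuous_on {0..K} argy" unfolding argy_def by (intro continuous_intros bcont ccont) (use lam in auto)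
  have ci: "continuous_on (psi ` {0..K}) (the_inv_into {0..K} psi)"
    by (rule continuous_on_inv_into[OF psi_cont compact_Icc psi_inj])
  show ?thesis unfolding g_def
    by (rule continuous_on_compose2[OF ci ca]) (use argy_in in auto)
qed

lemma space_act: "space (act K) = {0..K}"
  by (simp add: act_def space_restrict_space)

lemma meas_act: "continuous_on {0..K} f \<Longrightarrow> f \<in> borel_measurable (act K)"
  unfolding act_def by (rule borel_measurable_continuous_on_restrict)

lemma g_meas: "g \<in> act K \<rightarrow>\<^sub>M act K"
  unfolding act_def
proof (rule measurable_restrict_space2)
  show "g \<in> space (restrict_space borel {0..K}) \<rightarrow> {0..K}"
    using g_in by (simp add: space_restrict_space Pi_iff)
  show "g \<in> restrict_space borel {0..K} \<rightarrow>\<^sub>M borel"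
    by (intro borel_measurable_continuous_on_restrict g_cont)
qed


lemma sX_meas: "sX t \<in> histM K t \<rightarrow>\<^sub>M prob_algebra (act K)"
proof (cases t)
  case 0
  have "return (act K) x0 \<in> space (prob_algebra (act K))"
    by (rule measurable_space[OF measurable_return_prob_space]) (use x0 in \<open>simp add: space_act\<close>)
  then have "(\<lambda>h. return (act K) x0) \<in> histM K t \<rightarrow>\<^sub>M prob_algebra (act K)"
    by (rule measurable_const)
  moreover have "sX t = (\<lambda>h. return (act K) x0)" using 0 unfolding sX_def memory_one_def by (intro ext) simp
  ultimately show ?thesis by simp
next
  case (Suc n)
  have "n \<in> {..<t}" using Suc by simp
  then have "(\<lambda>h. h n) \<in> histM K t \<rightarrow>\<^sub>M act K \<Otimes>\<^sub>M act K"
    unfolding histM_def by (rule measurable_component_singleton)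
  then have "(\<lambda>h. g (snd (h n))) \<in> histM K t \<rightarrow>\<^sub>M act K"
    using measurable_compose[OF measurable_compose[OF _ measurable_snd] g_meas] by blast
  then have "(\<lambda>h. return (act K) (g (snd (h n)))) \<in> histM K t \<rightarrow>\<^sub>M prob_algebra (act K)"
    by (rule measurable_compose[OF _ measurable_return_prob_space])
  moreover have "sX t = (\<lambda>h. return (act K) (g (snd (h n))))" using Suc unfolding sX_def memory_one_def by (intro ext) simp
  ultimately show ?thesis by simp
qed



lemma b_meas: "b \<in> borel_measurable (act K)" by (rule meas_act[OF bcont])
lemma c_meas: "c \<in> borel_measurable (act K)" by (rule meas_act[OF ccont])
lemma psi_meas: "psi \<in> borel_measurable (act K)" by (rule meas_act[OF psi_cont])
lemma phi_meas: "phi \<in> borel_measurable (act K)"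
  unfolding phi_def by (intro meas_act continuous_intros bcont ccont)
lemma argy_meas: "argy \<in> borel_measurable (act K)"
  unfolding argy_def by (intro meas_act continuous_intros bcont ccont) (use lam in auto)

lemma psi_bnd: "x \<in> {0..K} \<Longrightarrow> \<bar>psi x\<bar> \<le> chi * b K + c K"
proof -
  assume x: "x \<in> {0..K}"
  have "0 \<le> chi * b x" "chi * b x \<le> chi * b K" using b_bnd[OF x] chi by (auto intro: mult_left_mono)
  then show ?thesis using c_bnd[OF x] unfolding psi_def by auto
qed

lemma phi_bnd: "x \<in> {0..K} \<Longrightarrow> \<bar>phi x\<bar> \<le> b K + chi * c K"
proof -
  assume x: "x \<in> {0..K}"
  have "0 \<le> chi * c x" "chi * c x \<le> chi * c K" using c_bnd[OF x] chi by (auto intro: mult_left_mono)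
  then show ?thesis using b_bnd[OF x] unfolding phi_def by auto
qed

lemma ret_pair:
  assumes z: "z \<in> {0..K}" and N: "N \<in> space (prob_algebra (act K))"
  shows "(\<integral>a. psi (fst a) \<partial>(return (act K) z \<Otimes>\<^sub>M N)) = psi z"
proof -
  have pN: "prob_space N" using N by (simp add: space_prob_algebra)
  have d: "distr (return (act K) z \<Otimes>\<^sub>M N) (return (act K) z) fst = return (act K) z"
    by (rule prob_space.distr_pair_fst[OF pN])
  have "(\<integral>a. psi (fst a) \<partial>(return (act K) z \<Otimes>\<^sub>M N)) = (\<integral>a. psi a \<partial>distr (return (act K) z \<Otimes>\<^sub>M N) (return (act K) z) fst)"
    by (rule integral_distr[symmetric, OF measurable_fst]) (simp add: psi_meas)
  also have "\<dots> = psi z" unfolding d by (rule integral_return) (use z psi_meas space_act in auto)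
  finally show ?thesis .
qed

context fixes sY assumes sY: "behavioral_strategy K sY"
begin

abbreviation "H t \<equiv> hist_law K sX sY t"
abbreviation "Q t h \<equiv> sX t h \<Otimes>\<^sub>M sY t h"
abbreviation "Kn t h \<equiv> distr (Q t h) (histM K (Suc t)) (\<lambda>a. h(t := a))"
abbreviation "nu t \<equiv> action_law K sX sY t"

lemma sY_meas: "sY t \<in> histM K t \<rightarrow>\<^sub>M prob_algebra (act K)"
  using sY unfolding behavioral_strategy_def by blast

lemma Q_meas: "(\<lambda>h. Q t h) \<in> histM K t \<rightarrow>\<^sub>M prob_algebra (act K \<Otimes>\<^sub>M act K)"
  by (rule measurable_pair_prob[OF sX_meas sY_meas])

lemma upd_meas: "(\<lambda>(h, a). h(t := a)) \<in> histM K t \<Otimes>\<^sub>M (act K \<Otimes>\<^sub>M act K) \<rightarrow>\<^sub>M histM K (Suc t)"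
proof -
  have "insert t {..<t} = {..<Suc t}" by auto
  then show ?thesis unfolding histM_def
    using measurable_add_dim[of t "{..<t}" "\<lambda>_. act K \<Otimes>\<^sub>M act K"] by simp
qed

lemma Kn_meas: "(\<lambda>h. Kn t h) \<in> histM K t \<rightarrow>\<^sub>M prob_algebra (histM K (Suc t))"
  using measurable_distr_prob_space2[OF Q_meas, of "\<lambda>h a. h(t := a)"] upd_meas by simp

lemma H_space: "H t \<in> space (prob_algebra (histM K t))"
proof (induction t)
  case 0
  have "(\<lambda>_. undefined) \<in> space (histM K 0)" by (simp add: histM_def space_PiM)
  then show ?case by (simp add: measurable_space[OF measurable_return_prob_space])
next
  case (Suc t)
  have "prob_space (H (Suc t))" "sets (H (Suc t)) = sets (histM K (Suc t))"
    using prob_space_bind'[OF Suc Kn_meas] sets_bind'[OF Suc Kn_meas] by simp_all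
  then show ?case by (simp add: space_prob_algebra)
qed

lemma H_prob: "prob_space (H t)"
  using H_space[of t] by (simp add: space_prob_algebra)

lemma H_sets: "sets (H t) = sets (histM K t)"
  using H_space[of t] by (simp add: space_prob_algebra)

lemma comp_meas: "(\<lambda>h. h t) \<in> histM K (Suc t) \<rightarrow>\<^sub>M act K \<Otimes>\<^sub>M act K"
  unfolding histM_def by (rule measurable_component_singleton) simp

lemma comp_measH: "(\<lambda>h. h t) \<in> H (Suc t) \<rightarrow>\<^sub>M act K \<Otimes>\<^sub>M act K"
  using measurable_cong_sets[OF H_sets[of "Suc t"] refl, of "act K \<Otimes>\<^sub>M act K"] comp_meas[of t] by metis

lemma nu_def': "nu t = distr (H (Suc t)) (act K \<Otimes>\<^sub>M act K) (\<lambda>h. h t)"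
  by (simp add: action_law_def)

lemma nu_prob: "prob_space (nu t)"
  unfolding nu_def' by (rule prob_space.prob_space_distr[OF H_prob])
    (rule comp_measH)

lemma nu_sets: "sets (nu t) = sets (act K \<Otimes>\<^sub>M act K)"
  unfolding nu_def' by simp

lemma nu_space: "space (nu t) = {0..K} \<times> {0..K}"
  unfolding nu_def' by (simp add: space_pair_measure space_act)


lemma Q_sets: "h \<in> space (histM K t) \<Longrightarrow> sets (Q t h) = sets (act K \<Otimes>\<^sub>M act K)"
  using measurable_space[OF Q_meas] by (simp add: space_prob_algebra)

lemma Q_prob: "h \<in> space (histM K t) \<Longrightarrow> prob_space (Q t h)"
  using measurable_space[OF Q_meas] by (simp add: space_prob_algebra)

lemma nu_int:
  fixes f :: "real \<times> real \<Rightarrow> real"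
  assumes f: "f \<in> borel_measurable (act K \<Otimes>\<^sub>M act K)"
    and B: "\<And>a. a \<in> space (act K \<Otimes>\<^sub>M act K) \<Longrightarrow> \<bar>f a\<bar> \<le> B"
  shows "(\<integral>a. f a \<partial>nu t) = (\<integral>h. (\<integral>a. f a \<partial>Q t h) \<partial>H t)"
proof -
  have 1: "(\<integral>a. f a \<partial>nu t) = (\<integral>h. f (h t) \<partial>H (Suc t))"
    unfolding nu_def' by (rule integral_distr[OF comp_measH[of t] f])
  have Kn: "(\<lambda>h. Kn t h) \<in> H t \<rightarrow>\<^sub>M subprob_algebra (histM K (Suc t))"
    using measurable_cong_sets[OF H_sets[of t] refl, of "subprob_algebra (histM K (Suc t))"]
      measurable_prob_algebraD[OF Kn_meas[of t]] by metis
  have 2: "(\<integral>h. f (h t) \<partial>(H t \<bind> (\<lambda>h. Kn t h))) = (\<integral>h. (\<integral>h'. f (h' t) \<partial>Kn t h) \<partial>H t)"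
  proof (rule integral_bind[where K="histM K (Suc t)" and B=B and B'=1])
    show "(\<lambda>h. f (h t)) \<in> borel_measurable (histM K (Suc t))"
      by (rule measurable_compose[OF comp_meas[of t] f])
    show "\<bar>f (x t)\<bar> \<le> B" if "x \<in> space (histM K (Suc t))" for x
      using B measurable_space[OF comp_meas[of t] that] by blast
    show "(\<lambda>h. Kn t h) \<in> H t \<rightarrow>\<^sub>M subprob_algebra (histM K (Suc t))" by (rule Kn)
    show "finite_measure (H t)" using H_prob[of t] by (simp add: prob_space_def)
    show "AE x in H t. emeasure (Kn t x) (space (Kn t x)) \<le> ennreal 1"
    proof (rule AE_I2)
      fix h assume "h \<in> space (H t)"
      then have "h \<in> space (histM K t)" using sets_eq_imp_space_eq[OF H_sets] by simp
      then have "prob_space (Kn t h)" using measurable_space[OF Kn_meas] by (simp add: space_prob_algebra)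
      then show "emeasure (Kn t h) (space (Kn t h)) \<le> ennreal 1" using prob_space.emeasure_space_1 by (metis ennreal_1 order.refl)
    qed
  qed
  have 3: "(\<integral>h'. f (h' t) \<partial>Kn t h) = (\<integral>a. f a \<partial>Q t h)" if h: "h \<in> space (H t)" for h
  proof -
    have hs: "h \<in> space (histM K t)" using h sets_eq_imp_space_eq[OF H_sets] by simp
    have "(\<lambda>a. case (h, a) of (h, a) \<Rightarrow> h(t := a)) \<in> act K \<Otimes>\<^sub>M act K \<rightarrow>\<^sub>M histM K (Suc t)"
      by (rule measurable_Pair2[OF upd_meas hs])
    then have m: "(\<lambda>a. h(t := a)) \<in> Q t h \<rightarrow>\<^sub>M histM K (Suc t)"
      using measurable_cong_sets[OF Q_sets[OF hs] refl, of "histM K (Suc t)"] by (simp only: case_prod_conv)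
    have "(\<integral>h'. f (h' t) \<partial>Kn t h) = (\<integral>a. f ((h(t := a)) t) \<partial>Q t h)"
      by (rule integral_distr[OF m measurable_compose[OF comp_meas[of t] f]])
    then show ?thesis by simp
  qed
  have 4: "(\<integral>h. (\<integral>h'. f (h' t) \<partial>Kn t h) \<partial>H t) = (\<integral>h. (\<integral>a. f a \<partial>Q t h) \<partial>H t)"
    by (rule Bochner_Integration.integral_cong[OF refl 3])
  have 5: "H (Suc t) = H t \<bind> (\<lambda>h. Kn t h)" by simp
  show ?thesis unfolding 1 5 2 4 ..
qed


definition "P t = (\<integral>a. psi (fst a) \<partial>nu t)"
definition "F t = (\<integral>a. phi (snd a) \<partial>nu t)"

lemma nu_meas: "f \<in> borel_measurable (act K \<Otimes>\<^sub>M act K) \<Longrightarrow> f \<in> borel_measurable (nu t)"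
  using measurable_cong_sets[OF nu_sets[of t] refl, of borel] by blast

lemma psi_fst_meas: "(\<lambda>a. psi (fst a)) \<in> borel_measurable (act K \<Otimes>\<^sub>M act K)"
  by (rule measurable_compose[OF measurable_fst psi_meas])
lemma phi_snd_meas: "(\<lambda>a. phi (snd a)) \<in> borel_measurable (act K \<Otimes>\<^sub>M act K)"
  by (rule measurable_compose[OF measurable_snd phi_meas])

lemma space_AA: "space (act K \<Otimes>\<^sub>M act K) = {0..K} \<times> {0..K}"
  by (simp add: space_pair_measure space_act)

lemma psi_fst_bnd: "a \<in> space (act K \<Otimes>\<^sub>M act K) \<Longrightarrow> \<bar>psi (fst a)\<bar> \<le> chi * b K + c K"
  using psi_bnd unfolding space_AA by auto
lemma phi_snd_bnd: "a \<in> space (act K \<Otimes>\<^sub>M act K) \<Longrightarrow> \<bar>phi (snd a)\<bar> \<le> b K + chi * c K"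
  using phi_bnd unfolding space_AA by auto

lemma phi_int: "integrable (nu t) (\<lambda>a. phi (snd a))"
  by (rule int_bnd(1)[OF nu_prob nu_meas[OF phi_snd_meas]]) (use phi_snd_bnd nu_space space_AA in auto)

lemma P0: "P 0 = psi x0"
proof -
  have "P 0 = (\<integral>h. (\<integral>a. psi (fst a) \<partial>Q 0 h) \<partial>H 0)"
    unfolding P_def by (rule nu_int[OF psi_fst_meas psi_fst_bnd])
  also have "\<dots> = (\<integral>h. psi x0 \<partial>H 0)"
  proof (rule Bochner_Integration.integral_cong[OF refl])
    fix h assume "h \<in> space (H 0)"
    then have hs: "h \<in> space (histM K 0)" by (metis sets_eq_imp_space_eq H_sets)
    have "sX 0 h = return (act K) x0" by (simp add: sX_def memory_one_def)
    then show "(\<integral>a. psi (fst a) \<partial>Q 0 h) = psi x0"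
      using ret_pair[OF x0 measurable_space[OF sY_meas hs]] by simp
  qed
  also have "\<dots> = psi x0"
  proof -
    have "measure (H 0) (space (H 0)) = 1" by (rule prob_space.prob_space[OF H_prob])
    then show ?thesis by (simp only: lebesgue_integral_const) simp
  qed
  finally show ?thesis .
qed

lemma PSuc: "P (Suc t) = (- F t - Cst) / lam"
proof -
  have "P (Suc t) = (\<integral>h. (\<integral>a. psi (fst a) \<partial>Q (Suc t) h) \<partial>H (Suc t))"
    unfolding P_def by (rule nu_int[OF psi_fst_meas psi_fst_bnd])
  also have "\<dots> = (\<integral>h. argy (snd (h t)) \<partial>H (Suc t))"
  proof (rule Bochner_Integration.integral_cong[OF refl])
    fix h assume "h \<in> space (H (Suc t))"
    then have hs: "h \<in> space (histM K (Suc t))" by (metis sets_eq_imp_space_eq H_sets)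
    have ht: "snd (h t) \<in> {0..K}" using measurable_space[OF comp_meas hs] space_AA by auto
    have "sX (Suc t) h = return (act K) (g (snd (h t)))" by (simp add: sX_def memory_one_def)
    then show "(\<integral>a. psi (fst a) \<partial>Q (Suc t) h) = argy (snd (h t))"
      using ret_pair[OF g_in[OF ht] measurable_space[OF sY_meas hs]] psi_g[OF ht] by simp
  qed
  also have "\<dots> = (\<integral>a. argy (snd a) \<partial>nu t)"
    unfolding nu_def' by (rule integral_distr[symmetric, OF comp_measH measurable_compose[OF measurable_snd argy_meas]])
  also have "\<dots> = (\<integral>a. (- phi (snd a) - Cst) / lam \<partial>nu t)" by (simp add: argy_eq)
  also have "\<dots> = (- F t - Cst) / lam"
  proof -
    have "(\<integral>a. - phi (snd a) - Cst \<partial>nu t) = (\<integral>a. - phi (snd a) \<partial>nu t) - (\<integral>a. Cst \<partial>nu t)"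
      using phi_int[of t] prob_space.finite_measure[OF nu_prob[of t]]
      by (intro Bochner_Integration.integral_diff) (auto intro: finite_measure.integrable_const)
    also have "\<dots> = - F t - Cst" using prob_space.prob_space[OF nu_prob[of t]] unfolding F_def by simp
    finally show ?thesis by simp
  qed
  finally show ?thesis .
qed


lemma P_bnd: "\<bar>P t\<bar> \<le> chi * b K + c K"
  unfolding P_def by (rule int_bnd(2)[OF nu_prob nu_meas[OF psi_fst_meas]]) (use psi_fst_bnd nu_space space_AA in auto)

lemma F_eq: "F t = - lam * P (Suc t) - Cst"
  using PSuc[of t] lam by (simp add: field_simps)

definition "IX t = (\<integral>a. (case a of (x, y) \<Rightarrow> b y - c x) \<partial>nu t)"
definition "IY t = (\<integral>a. (case a of (x, y) \<Rightarrow> b x - c y) \<partial>nu t)"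

lemma uX_eq: "(\<lambda>(x::real, y::real). b y - c x) = (\<lambda>a. b (snd a) - c (fst a))" by auto
lemma uY_eq: "(\<lambda>(x::real, y::real). b x - c y) = (\<lambda>a. b (fst a) - c (snd a))" by auto

lemma uX_meas: "(\<lambda>(x, y). b y - c x) \<in> borel_measurable (nu t)"
  unfolding uX_eq by (intro nu_meas borel_measurable_diff measurable_compose[OF measurable_snd b_meas]
      measurable_compose[OF measurable_fst c_meas])
lemma uY_meas: "(\<lambda>(x, y). b x - c y) \<in> borel_measurable (nu t)"
  unfolding uY_eq by (intro nu_meas borel_measurable_diff measurable_compose[OF measurable_snd c_meas]
      measurable_compose[OF measurable_fst b_meas])

lemma uX_bnd: "a \<in> space (nu t) \<Longrightarrow> \<bar>(case a of (x, y) \<Rightarrow> b y - c x)\<bar> \<le> b K + c K"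
  unfolding nu_space using b_bnd c_bnd by (auto simp: abs_le_iff) (smt (verit))+
lemma uY_bnd: "a \<in> space (nu t) \<Longrightarrow> \<bar>(case a of (x, y) \<Rightarrow> b x - c y)\<bar> \<le> b K + c K"
  unfolding nu_space using b_bnd c_bnd by (auto simp: abs_le_iff) (smt (verit))+

lemma IX_bnd: "\<bar>IX t\<bar> \<le> b K + c K" unfolding IX_def by (rule int_bnd(2)[OF nu_prob uX_meas uX_bnd])
lemma IY_bnd: "\<bar>IY t\<bar> \<le> b K + c K" unfolding IY_def by (rule int_bnd(2)[OF nu_prob uY_meas uY_bnd])

lemma IXY: "IX t - chi * IY t = F t + P t"
proof -
  have iX: "integrable (nu t) (\<lambda>(x, y). b y - c x)" by (rule int_bnd(1)[OF nu_prob uX_meas uX_bnd])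
  have iY: "integrable (nu t) (\<lambda>(x, y). b x - c y)" by (rule int_bnd(1)[OF nu_prob uY_meas uY_bnd])
  have iF: "integrable (nu t) (\<lambda>a. phi (snd a))" by (rule phi_int)
  have iP: "integrable (nu t) (\<lambda>a. psi (fst a))"
    by (rule int_bnd(1)[OF nu_prob nu_meas[OF psi_fst_meas]]) (use psi_fst_bnd nu_space space_AA in auto)
  have "IX t - chi * IY t = (\<integral>a. (case a of (x, y) \<Rightarrow> b y - c x) - chi * (case a of (x, y) \<Rightarrow> b x - c y) \<partial>nu t)"
    unfolding IX_def IY_def using iX iY by (simp add: Bochner_Integration.integral_diff)
  also have "\<dots> = (\<integral>a. phi (snd a) + psi (fst a) \<partial>nu t)"
    by (rule Bochner_Integration.integral_cong) (auto simp: phi_def psi_def algebra_simps)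
  also have "\<dots> = F t + P t" unfolding F_def P_def using iF iP by simp
  finally show ?thesis .
qed

lemma sumI: "(\<And>t. \<bar>f t\<bar> \<le> B) \<Longrightarrow> summable (\<lambda>t. lam ^ t * f t)"
  apply (rule summable_comparison_test'[where g="\<lambda>t. B * lam ^ t" and N=0])
   apply (rule summable_mult, rule summable_geometric) using lam apply simp
  using lam by (simp add: abs_mult mult.commute mult_right_mono)

lemma payoff_rel:
  "payoff K lam (\<lambda>(x, y). b y - c x) sX sY - kappa = chi * (payoff K lam (\<lambda>(x, y). b x - c y) sX sY - kappa)"
proof -
  have sX': "summable (\<lambda>t. lam ^ t * IX t)" by (rule sumI[OF IX_bnd])
  have sY': "summable (\<lambda>t. lam ^ t * IY t)" by (rule sumI[OF IY_bnd])
  have sP: "summable (\<lambda>t. lam ^ t * P t)" by (rule sumI[OF P_bnd])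
  have sG: "summable (\<lambda>t. lam ^ t)" using lam by (intro summable_geometric) simp
  have sP': "summable (\<lambda>t. lam ^ Suc t * P (Suc t))" using sP by (rule summable_Suc_iff[THEN iffD2])
  have "(\<Sum>t. lam ^ t * IX t) - chi * (\<Sum>t. lam ^ t * IY t) = (\<Sum>t. lam ^ t * IX t - chi * (lam ^ t * IY t))"
    using suminf_diff[OF sX' summable_mult[OF sY', of chi]] suminf_mult[OF sY', of chi] by simp
  also have "\<dots> = (\<Sum>t. (lam ^ t * P t - lam ^ Suc t * P (Suc t)) - Cst * lam ^ t)"
  proof (rule suminf_cong)
    fix t
    have "lam ^ t * IX t - chi * (lam ^ t * IY t) = lam ^ t * (F t + P t)" using IXY[of t] by (simp add: algebra_simps)
    also have "\<dots> = (lam ^ t * P t - lam ^ Suc t * P (Suc t)) - Cst * lam ^ t" unfolding F_eq by (simp add: algebra_simps)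
    finally show "lam ^ t * IX t - chi * (lam ^ t * IY t) = (lam ^ t * P t - lam ^ Suc t * P (Suc t)) - Cst * lam ^ t" .
  qed
  also have "\<dots> = ((\<Sum>t. lam ^ t * P t) - (\<Sum>t. lam ^ Suc t * P (Suc t))) - Cst * (\<Sum>t. lam ^ t)"
    using suminf_diff[OF summable_diff[OF sP sP'] summable_mult[OF sG, of Cst]]
      suminf_diff[OF sP sP'] suminf_mult[OF sG, of Cst] by simp
  also have "(\<Sum>t. lam ^ Suc t * P (Suc t)) = (\<Sum>t. lam ^ t * P t) - P 0"
    using suminf_split_head[OF sP] by simp
  also have "(\<Sum>t. lam ^ t) = 1 / (1 - lam)" using lam by (intro suminf_geometric) simp
  finally have key: "(\<Sum>t. lam ^ t * IX t) - chi * (\<Sum>t. lam ^ t * IY t) = psi x0 - Cst / (1 - lam)"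
    unfolding P0 by simp
  have p1: "payoff K lam (\<lambda>(x, y). b y - c x) sX sY = (1 - lam) * (\<Sum>t. lam ^ t * IX t)"
    unfolding payoff_def IX_def ..
  have p2: "payoff K lam (\<lambda>(x, y). b x - c y) sX sY = (1 - lam) * (\<Sum>t. lam ^ t * IY t)"
    unfolding payoff_def IY_def ..
  have m: "(1 - lam) * ((\<Sum>t. lam ^ t * IX t) - chi * (\<Sum>t. lam ^ t * IY t)) = - (chi - 1) * kappa"
    unfolding key Cst_def using lam by (simp add: field_simps)
  have id: "(1 - lam) * SX - kappa - chi * ((1 - lam) * SY - kappa) = (1 - lam) * (SX - chi * SY) + (chi - 1) * kappa" for SX SY
    by (simp add: algebra_simps)
  show ?thesis unfolding p1 p2 using id[of "\<Sum>t. lam ^ t * IX t" "\<Sum>t. lam ^ t * IY t"] m by linarith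
qed

end

end

theorem mainTheorem11:
  fixes K lam chi kappa x0 :: real and b c :: "real \<Rightarrow> real"
  assumes K: "K > 0"
    and b0: "b 0 = 0" and c0: "c 0 = 0"
    and bc: "\<And>s. s \<in> {0<..K} \<Longrightarrow> b s > c s"
    and bmono: "mono_on {0..K} b" and cmono: "mono_on {0..K} c"
    and bcont: "continuous_on {0..K} b" and ccont: "continuous_on {0..K} c"
    and lam: "0 < lam" "lam < 1"
    and chi: "chi \<ge> 1"
    and smono: "strict_mono_on {0..K} (\<lambda>s. chi * b s + c s)"
    and kappa: "0 \<le> kappa" "kappa \<le> b K - c K"
    and lamge: "lam \<ge> (b K + chi * c K) / (chi * b K + c K)"
    and x0: "x0 \<in> {0..K}"
    and x0lo: "((chi - 1) * kappa - lam * (chi * b K + c K) + b K + chi * c K) / (1 - lam)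
                 \<le> chi * b x0 + c x0"
    and x0hi: "chi * b x0 + c x0 \<le> (chi - 1) * kappa / (1 - lam)"
  shows "let psi = (\<lambda>s. - chi * b s - c s);
             arg = (\<lambda>(x::real) y. (- b y - chi * c y - (chi - 1) * kappa - (1 - lam) * psi x0) / lam);
             rX = (\<lambda>(x, y). the_inv_into {0..K} psi (arg x y));
             sX = memory_one (return (act K) x0) (\<lambda>p. return (act K) (rX p))
         in (\<forall>x\<in>{0..K}. \<forall>y\<in>{0..K}. arg x y \<in> psi ` {0..K}) \<and>
            (\<forall>sY. behavioral_strategy K sY \<longrightarrow>
               payoff K lam (\<lambda>(x, y). b y - c x) sX sY - kappa
                 = chi * (payoff K lam (\<lambda>(x, y). b x - c y) sX sY - kappa))"
proof -
  interpret L: DG K lam chi kappa x0 b c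
    by unfold_locales (use K b0 c0 bmono cmono bcont ccont lam chi smono x0 x0lo x0hi in auto)
  have ps: "(\<lambda>s. - chi * b s - c s) = L.psi" by (simp add: fun_eq_iff L.psi_def)
  have sxeq: "(\<lambda>p. return (act K) (case p of (x, y) \<Rightarrow> L.g y)) = (\<lambda>p. return (act K) (L.g (snd p)))"
    by (auto simp: fun_eq_iff split: prod.split)
  show ?thesis
    unfolding Let_def ps L.argy_def[symmetric] L.g_def[symmetric] sxeq L.sX_def[symmetric]
    using L.argy_in L.payoff_rel by blast
qed

end
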